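(* Let $(G,+,p)$ be a valued Abelian group. (I) $G$ is of class $\mathcal{O}_0$ if and only if $G$ admits no nonzero bounded group homomorphism into a Banach space. (II) $G$ is of class $\mathcal{O}_\infty$ if and only if $G$ admits an isometric group homomorphism into a Banach space. (III) $G$ is of class $\mathcal{O}_1$ if and only if $G$ admits a nonexpansive group homomorphism with trivial kernel into a Banach space, if and only if $G$ admits a bounded group homomorphism with trivial kernel into a Banach space.
   Context: A value on an Abelian group $G$ is $p\colon G\to[0,\infty)$ with $p(x)=0\iff x=0$, $p(-x)=p(x)$, $p(x+y)\leqslant p(x)+p(y)$. For $x\in G$ let $p_{0*}(x)=\lim_{n\to\infty}p(nx)/n$ (this limit exists). $G$ is of class $\mathcal{O}_0$ if $p_{0*}\equiv0$; of class $\mathcal{O}_\infty$ if $p_{0*}=p$ (equivalently $p(kx)=|k|p(x)$ for all $k\in\mathbb{Z}$, $x\in G$); of class $\mathcal{O}_1$ if $p_{0*}$ is a value (i.e. $p_{0*}(x)=0$ only for $x=0$). A modulus of continuity is a monotone increasing, subadditive $\omega\colon[0,\infty)\to[0,\infty)$ with $\lim_{t\to0^+}\omega(t)=\omega(0)=0$. A group homomorphism $\psi$ from $G$ into a Banach space $E$ is bounded if there is a modulus of continuity $\omega$ with $\|\psi(x)\|\leqslant\omega(p(x))$ for all $x\in G$; it is nonexpansive if $\|\psi(x)\|\leqslant p(x)$ for all $x$; isometric if $\|\psi(x)\|=p(x)$ for all $x$. *)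

theory Defs
  imports "HOL-Analysis.Analysis" "HOL-Probability.Discrete_Topology"
begin

definition is_value :: "('g::ab_group_add \<Rightarrow> real) \<Rightarrow> bool" where
  "is_value p \<longleftrightarrow> (\<forall>x. p x \<ge> 0) \<and> (\<forall>x. p x = 0 \<longleftrightarrow> x = 0) \<and>
     (\<forall>x. p (- x) = p x) \<and> (\<forall>x y. p (x + y) \<le> p x + p y)"

definition gmult :: "nat \<Rightarrow> 'g::ab_group_add \<Rightarrow> 'g" where
  "gmult n x = (\<Sum>i<n. x)"

definition p0star :: "('g::ab_group_add \<Rightarrow> real) \<Rightarrow> 'g \<Rightarrow> real" where
  "p0star p x = lim (\<lambda>n. p (gmult n x) / real n)"

definition class_O0 :: "('g::ab_group_add \<Rightarrow> real) \<Rightarrow> bool" where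
  "class_O0 p \<longleftrightarrow> (\<forall>x. p0star p x = 0)"

definition class_Oinf :: "('g::ab_group_add \<Rightarrow> real) \<Rightarrow> bool" where
  "class_Oinf p \<longleftrightarrow> (\<forall>x. p0star p x = p x)"

definition class_O1 :: "('g::ab_group_add \<Rightarrow> real) \<Rightarrow> bool" where
  "class_O1 p \<longleftrightarrow> is_value (p0star p)"

definition modulus_of_continuity :: "(real \<Rightarrow> real) \<Rightarrow> bool" where
  "modulus_of_continuity \<omega> \<longleftrightarrow>
     (\<forall>t\<ge>0. \<omega> t \<ge> 0) \<and> mono_on {0..} \<omega> \<and>
     (\<forall>s\<ge>0. \<forall>t\<ge>0. \<omega> (s + t) \<le> \<omega> s + \<omega> t) \<and>
     \<omega> 0 = 0 \<and> (\<omega> \<longlongrightarrow> 0) (at_right 0)"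

definition group_hom :: "('g::ab_group_add \<Rightarrow> 'e::ab_group_add) \<Rightarrow> bool" where
  "group_hom \<psi> \<longleftrightarrow> (\<forall>x y. \<psi> (x + y) = \<psi> x + \<psi> y)"

definition bounded_hom :: "('g::ab_group_add \<Rightarrow> real) \<Rightarrow> ('g \<Rightarrow> 'e::real_normed_vector) \<Rightarrow> bool" where
  "bounded_hom p \<psi> \<longleftrightarrow> (\<exists>\<omega>. modulus_of_continuity \<omega> \<and> (\<forall>x. norm (\<psi> x) \<le> \<omega> (p x)))"

definition nonexpansive_hom :: "('g::ab_group_add \<Rightarrow> real) \<Rightarrow> ('g \<Rightarrow> 'e::real_normed_vector) \<Rightarrow> bool" where
  "nonexpansive_hom p \<psi> \<longleftrightarrow> (\<forall>x. norm (\<psi> x) \<le> p x)"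

definition isometric_hom :: "('g::ab_group_add \<Rightarrow> real) \<Rightarrow> ('g \<Rightarrow> 'e::real_normed_vector) \<Rightarrow> bool" where
  "isometric_hom p \<psi> \<longleftrightarrow> (\<forall>x. norm (\<psi> x) = p x)"

definition trivial_kernel :: "('g::ab_group_add \<Rightarrow> 'e::ab_group_add) \<Rightarrow> bool" where
  "trivial_kernel \<psi> \<longleftrightarrow> (\<forall>x. \<psi> x = 0 \<longrightarrow> x = 0)"

text \<open>The concrete Banach space l-infinity(G): bounded real functions on G with the sup norm,
  realised as bounded continuous functions on G with the discrete topology.\<close>
type_synonym 'g linf = "'g discrete \<Rightarrow>\<^sub>C real"

end

theory Submission
  imports Defs
begin

lemma gmult_0[simp]: "gmult 0 x = 0" by (simp add: gmult_def)
lemma gmult_Suc: "gmult (Suc n) x = x + gmult n x" by (simp add: gmult_def add.commute)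
lemma gmult_1[simp]: "gmult 1 x = x" by (simp add: gmult_def)
lemma gmult_add: "gmult (m + n) x = gmult m x + gmult n x"
  by (induction m) (simp_all add: gmult_Suc add.assoc)
lemma gmult_mult: "gmult (m * n) x = gmult m (gmult n x)"
  by (induction m) (simp_all add: gmult_Suc gmult_add)
lemma gmult_plus: "gmult n (x + y) = gmult n x + gmult n y"
  by (induction n) (simp_all add: gmult_Suc algebra_simps)
lemma gmult_uminus: "gmult n (- x) = - gmult n x"
  by (induction n) (simp_all add: gmult_Suc algebra_simps)
lemma gmult_zero[simp]: "gmult n (0::'a::ab_group_add) = 0"
  by (induction n) (simp_all add: gmult_Suc)

lemma hom_gmult:
  fixes \<psi> :: "'g::ab_group_add \<Rightarrow> 'e::real_vector"
  assumes "group_hom \<psi>" shows "\<psi> (gmult n x) = real n *\<^sub>R \<psi> x"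
proof (induction n)
  case 0
  have "\<psi> 0 = \<psi> 0 + \<psi> 0" using assms unfolding group_hom_def by (metis add_0)
  then show ?case by simp
next
  case (Suc n) then show ?case using assms unfolding group_hom_def
    by (simp add: gmult_Suc algebra_simps)
qed

lemma fekete_aux:
  fixes a :: "nat \<Rightarrow> real"
  assumes sub: "\<And>m n. a (m+n) \<le> a m + a n"
  shows "a (k*m + r) \<le> real k * a m + a r"
proof (induction k)
  case 0 then show ?case by simp
next
  case (Suc k)
  have "a (Suc k * m + r) = a (m + (k*m + r))" by (simp add: algebra_simps)
  also have "\<dots> \<le> a m + a (k*m+r)" by (rule sub)
  also have "\<dots> \<le> a m + (real k * a m + a r)" using Suc by simp
  finally show ?case by (simp add: algebra_simps)
qed

lemma fekete:
  fixes a :: "nat \<Rightarrow> real"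
  assumes sub: "\<And>m n. a (m+n) \<le> a m + a n" and nn: "\<And>n. a n \<ge> 0"
  shows "convergent (\<lambda>n. a n / real n)"
proof -
  define L where "L = Inf ((\<lambda>n. a n / real n) ` {1..})"
  have bdd: "bdd_below ((\<lambda>n. a n / real n) ` {1..})"
    using nn by (intro bdd_belowI[of _ 0]) auto
  have Lle: "L \<le> a n / real n" if "n \<ge> 1" for n
    unfolding L_def using that bdd by (intro cInf_lower) auto
  have "(\<lambda>n. a n / real n) \<longlonglongrightarrow> L"
  proof (rule LIMSEQ_I)
    fix e :: real assume e: "e > 0"
    have "L < L + e/2" using e by simp
    then obtain m where m: "m \<ge> 1" "a m / real m < L + e/2"
      unfolding L_def by (subst (asm) cInf_less_iff) (use bdd in auto)
    define S where "S = (\<Sum>i<m. a i)"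
    have S0: "S \<ge> 0" unfolding S_def using nn by (simp add: sum_nonneg)
    have aS: "a r \<le> S" if "r < m" for r
      unfolding S_def using that nn by (intro member_le_sum) auto
    obtain N :: nat where N: "real N > 2 * S / e" using reals_Archimedean2 by blast
    show "\<exists>no. \<forall>n\<ge>no. norm (a n / real n - L) < e"
    proof (intro exI[of _ "N+1"] allI impI)
      fix n assume n: "n \<ge> N+1"
      hence npos: "real n > 0" by simp
      have "a ((n div m) * m + n mod m) \<le> real (n div m) * a m + a (n mod m)"
        by (rule fekete_aux[OF sub])
      hence "a n \<le> real (n div m) * a m + a (n mod m)"
        by (metis div_mult_mod_eq)
      also have "\<dots> \<le> real (n div m) * a m + S" using aS m(1) by simp
      finally have an: "a n \<le> real (n div m) * a m + S" .
      have "real (n div m) * real m \<le> real n"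
        by (metis of_nat_le_iff of_nat_mult div_times_less_eq_dividend)
      hence "real (n div m) * a m \<le> real n * (a m / real m)"
      proof -
        have "real (n div m) * a m = (real (n div m) * real m) * (a m / real m)"
          using m(1) by simp
        also have "\<dots> \<le> real n * (a m / real m)"
          by (rule mult_right_mono) (use \<open>real (n div m) * real m \<le> real n\<close> nn[of m] in auto)
        finally show ?thesis .
      qed
      hence "a n / real n \<le> a m / real m + S / real n"
        using an npos by (simp add: field_simps)
      moreover have "S / real n < e/2"
      proof -
        have "2 * S / e < real n" using N n by simp
        thus ?thesis using e npos S0 by (simp add: field_simps)
      qed
      ultimately have "a n / real n < L + e" using m(2) by linarith
      moreover have "L \<le> a n / real n" using Lle n by simp
      ultimately show "norm (a n / real n - L) < e" by simp
    qed
  qed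
  thus ?thesis by (rule convergentI)
qed

context fixes p :: "'g::ab_group_add \<Rightarrow> real" assumes pv: "is_value p"
begin

lemma pv_nn: "p x \<ge> 0" and pv_0: "p x = 0 \<longleftrightarrow> x = 0" and pv_sym: "p (-x) = p x"
  and pv_sub: "p (x + y) \<le> p x + p y"
  using pv unfolding is_value_def by auto

lemma pv_00: "p 0 = 0" using pv_0[of 0] by simp

lemma p_gmult_le: "p (gmult n x) \<le> real n * p x"
proof (induction n)
  case 0 then show ?case using pv_00 by simp
next
  case (Suc n) then show ?case using pv_sub[of x "gmult n x"] by (simp add: gmult_Suc algebra_simps)
qed

lemma q_conv: "(\<lambda>n. p (gmult n x) / real n) \<longlonglongrightarrow> p0star p x"
proof -
  have "convergent (\<lambda>n. p (gmult n x) / real n)"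
    by (rule fekete) (use pv_sub pv_nn in \<open>auto simp: gmult_add\<close>)
  thus ?thesis unfolding p0star_def by (simp add: convergent_LIMSEQ_iff)
qed

lemma q_le: "p0star p x \<le> p x"
proof (rule LIMSEQ_le_const2[OF q_conv])
  show "\<exists>N. \<forall>n\<ge>N. p (gmult n x) / real n \<le> p x"
  proof (intro exI[of _ 1] allI impI)
    fix n :: nat assume "n \<ge> 1"
    thus "p (gmult n x) / real n \<le> p x" using p_gmult_le[of n x] by (simp add: field_simps)
  qed
qed

lemma q_nn: "p0star p x \<ge> 0"
  by (rule LIMSEQ_le_const[OF q_conv]) (use pv_nn in auto)

lemma q_sym: "p0star p (- x) = p0star p x"
  unfolding p0star_def by (simp add: gmult_uminus pv_sym)

lemma q_sub: "p0star p (x + y) \<le> p0star p x + p0star p y"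
proof (rule LIMSEQ_le[OF q_conv tendsto_add[OF q_conv q_conv]])
  show "\<exists>N. \<forall>n\<ge>N. p (gmult n (x + y)) / real n \<le> p (gmult n x) / real n + p (gmult n y) / real n"
    by (intro exI[of _ 0] allI impI)
       (simp add: gmult_plus add_divide_distrib[symmetric] divide_right_mono pv_sub)
qed

lemma q_0: "p0star p 0 = 0"
proof -
  have "(\<lambda>n. p (gmult n 0) / real n) = (\<lambda>n. 0)" using pv_00 by simp
  thus ?thesis unfolding p0star_def by (simp add: limI)
qed

lemma q_hom: "p0star p (gmult k x) = real k * p0star p x"
proof (cases "k = 0")
  case True then show ?thesis using q_0 by simp
next
  case False
  have sm: "strict_mono (\<lambda>n. n * k)" using False by (simp add: strict_mono_def)
  have "(\<lambda>n. real k * (((\<lambda>n. p (gmult n x) / real n) \<circ> (\<lambda>n. n * k)) n)) \<longlonglongrightarrow> real k * p0star p x"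
    by (rule tendsto_mult_left[OF LIMSEQ_subseq_LIMSEQ[OF q_conv sm]])
  moreover have "(\<lambda>n. real k * (((\<lambda>n. p (gmult n x) / real n) \<circ> (\<lambda>n. n * k)) n)) = (\<lambda>n. p (gmult n (gmult k x)) / real n)"
  proof
    fix n
    show "real k * (((\<lambda>n. p (gmult n x) / real n) \<circ> (\<lambda>n. n * k)) n) = p (gmult n (gmult k x)) / real n"
      using False by (cases "n = 0") (auto simp: gmult_mult pv_00)
  qed
  ultimately have "(\<lambda>n. p (gmult n (gmult k x)) / real n) \<longlonglongrightarrow> real k * p0star p x" by simp
  thus ?thesis using q_conv[of "gmult k x"] LIMSEQ_unique by blast
qed

lemma q_small:
  assumes "p0star p x = 0" "d > 0"
  shows "\<exists>n\<ge>1. p (gmult n x) < real n * d"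
proof -
  have "eventually (\<lambda>n. p (gmult n x) / real n < d) sequentially"
    using order_tendstoD(2)[OF q_conv[of x]] assms by simp
  moreover have "eventually (\<lambda>n. n \<ge> (1::nat)) sequentially" by (rule eventually_ge_at_top)
  ultimately obtain n where "n \<ge> 1" "p (gmult n x) / real n < d"
    using eventually_happens'[OF sequentially_bot] eventually_conj by (metis (mono_tags, lifting))
  thus ?thesis by (intro exI[of _ n]) (simp add: field_simps)
qed

lemma bounded_kills:
  fixes \<psi> :: "'g \<Rightarrow> 'e::real_normed_vector"
  assumes hom: "group_hom \<psi>" and bd: "bounded_hom p \<psi>" and q0: "p0star p x = 0"
  shows "\<psi> x = 0"
proof (rule ccontr)
  assume nz: "\<psi> x \<noteq> 0"
  define c where "c = norm (\<psi> x)"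
  have c: "c > 0" using nz by (simp add: c_def)
  obtain \<omega> where mc: "modulus_of_continuity \<omega>" and le: "\<And>y. norm (\<psi> y) \<le> \<omega> (p y)"
    using bd unfolding bounded_hom_def by blast
  have \<omega>nn: "\<And>t. t \<ge> 0 \<Longrightarrow> \<omega> t \<ge> 0" and \<omega>mono: "mono_on {0..} \<omega>"
    and \<omega>sub: "\<And>s t. s \<ge> 0 \<Longrightarrow> t \<ge> 0 \<Longrightarrow> \<omega> (s + t) \<le> \<omega> s + \<omega> t"
    and \<omega>0: "\<omega> 0 = 0" and \<omega>lim: "(\<omega> \<longlongrightarrow> 0) (at_right 0)"
    using mc unfolding modulus_of_continuity_def by auto
  have "eventually (\<lambda>t. \<omega> t < c/2) (at_right 0)"
    by (rule order_tendstoD(2)[OF \<omega>lim]) (use c in simp)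
  then obtain b where b: "b > 0" "\<And>t. t > 0 \<Longrightarrow> t < b \<Longrightarrow> \<omega> t < c/2"
    unfolding eventually_at_right_field by auto
  define d where "d = b/2"
  have d: "d > 0" "\<omega> d < c/2" using b by (auto simp: d_def)
  have kd: "\<omega> (real k * d) \<le> real k * \<omega> d" for k
  proof (induction k)
    case 0 then show ?case using \<omega>0 by simp
  next
    case (Suc k)
    have "\<omega> (real (Suc k) * d) = \<omega> (d + real k * d)" by (simp add: algebra_simps)
    also have "\<dots> \<le> \<omega> d + \<omega> (real k * d)" using d by (intro \<omega>sub) auto
    finally show ?case using Suc by (simp add: algebra_simps)
  qed
  have wt: "\<omega> t \<le> (t / d + 1) * \<omega> d" if t: "t \<ge> 0" for t
  proof -
    define k where "k = nat \<lfloor>t / d\<rfloor> + 1"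
    have "t / d < real k" unfolding k_def using t d by linarith
    hence tk: "t \<le> real k * d" using d by (simp add: field_simps)
    have td: "0 \<le> t / d" using t d by simp
    have fl: "\<lfloor>t / d\<rfloor> \<ge> 0" using td by (simp only: zero_le_floor)
    have "real (nat \<lfloor>t / d\<rfloor>) = real_of_int \<lfloor>t / d\<rfloor>" by (rule of_nat_nat[OF fl])
    moreover have "real_of_int \<lfloor>t / d\<rfloor> \<le> t / d" by (rule of_int_floor_le)
    moreover have "real k = real (nat \<lfloor>t / d\<rfloor>) + 1" unfolding k_def by simp
    ultimately have "real k \<le> t / d + 1" by linarith
    have "\<omega> t \<le> \<omega> (real k * d)"
      using \<omega>mono tk t d by (intro mono_onD[OF \<omega>mono]) auto
    also have "\<dots> \<le> real k * \<omega> d" by (rule kd)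
    also have "\<dots> \<le> (t / d + 1) * \<omega> d"
      using \<open>real k \<le> t / d + 1\<close> \<omega>nn[of d] d by (intro mult_right_mono) auto
    finally show ?thesis .
  qed
  obtain n where n: "n \<ge> 1" "p (gmult n x) < real n * d" using q_small[OF q0 d(1)] by blast
  have "real n * c = norm (\<psi> (gmult n x))"
    unfolding c_def hom_gmult[OF hom] by simp
  also have "\<dots> \<le> \<omega> (p (gmult n x))" by (rule le)
  also have "\<dots> \<le> (p (gmult n x) / d + 1) * \<omega> d" using wt pv_nn by blast
  also have "\<dots> \<le> (real n + 1) * \<omega> d"
  proof (rule mult_right_mono)
    have "p (gmult n x) / d < real n" using n(2) d(1) by (simp add: divide_less_eq)
    thus "p (gmult n x) / d + 1 \<le> real n + 1" by linarith
    show "0 \<le> \<omega> d" using \<omega>nn[of d] d(1) by simp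
  qed
  also have "\<dots> < (real n + 1) * (c/2)"
    using d by (intro mult_strict_left_mono) auto
  finally have A: "real n * c < (real n + 1) * (c / 2)" .
  have B: "(real n + 1) * (c / 2) = real n * c / 2 + c / 2" by (simp add: algebra_simps)
  have C: "real n * c \<ge> 1 * c" using n c by (intro mult_right_mono) auto
  show False using A B C by linarith
qed

end

definition sublin :: "('g::ab_group_add \<Rightarrow> real) \<Rightarrow> bool" where
  "sublin r \<longleftrightarrow> (\<forall>x y. r (x + y) \<le> r x + r y) \<and> (\<forall>n x. r (gmult n x) = real n * r x)"

definition shiftf :: "('g::ab_group_add \<Rightarrow> real) \<Rightarrow> 'g \<Rightarrow> 'g \<Rightarrow> real" where
  "shiftf r z x = Inf (range (\<lambda>k. r (x + gmult k z) - real k * r z))"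

lemma sublin_sub: "sublin r \<Longrightarrow> r (x + y) \<le> r x + r y" by (simp add: sublin_def)
lemma sublin_hom: "sublin r \<Longrightarrow> r (gmult n x) = real n * r x" by (simp add: sublin_def)
lemma sublin_0: "sublin r \<Longrightarrow> r 0 = 0" using sublin_hom[of r 0 0] by simp
lemma sublin_neg: "sublin r \<Longrightarrow> - r x \<le> r (- x)"
  using sublin_sub[of r x "-x"] sublin_0[of r] by simp

lemma shiftf_props:
  assumes r: "sublin r"
  shows "sublin (shiftf r z)" "\<And>x. shiftf r z x \<le> r x" "shiftf r z (- z) \<le> - r z"
proof -
  define T where "T x k = r (x + gmult k z) - real k * r z" for x k
  have sh: "shiftf r z x = Inf (range (T x))" for x unfolding shiftf_def T_def by simp
  have Tlb: "- r (- x) \<le> T x k" for x k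
  proof -
    have "r (gmult k z) \<le> r (x + gmult k z) + r (- x)"
      using sublin_sub[OF r, of "x + gmult k z" "-x"] by simp
    thus ?thesis unfolding T_def using sublin_hom[OF r] by simp
  qed
  have bdd: "bdd_below (range (T x))" for x using Tlb by (intro bdd_belowI[of _ "- r (-x)"]) auto
  have le: "shiftf r z x \<le> T x k" for x k unfolding sh by (rule cInf_lower) (use bdd in auto)
  have ge: "c \<le> shiftf r z x" if "\<And>k. c \<le> T x k" for c x
    unfolding sh by (rule cInf_greatest) (use that in auto)
  show "shiftf r z x \<le> r x" for x using le[of x 0] by (simp add: T_def)
  show "shiftf r z (- z) \<le> - r z" using le[of "-z" 1] by (simp add: T_def sublin_0[OF r] gmult_Suc)
  have sub: "shiftf r z (x + y) \<le> shiftf r z x + shiftf r z y" for x y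
  proof -
    have "shiftf r z (x + y) \<le> T x j + T y k" for j k
    proof -
      have "shiftf r z (x + y) \<le> T (x + y) (j + k)" by (rule le)
      also have "\<dots> \<le> T x j + T y k"
      proof -
        have "x + y + gmult (j + k) z = (x + gmult j z) + (y + gmult k z)"
          by (simp add: gmult_add algebra_simps)
        thus ?thesis unfolding T_def using sublin_sub[OF r, of "x + gmult j z" "y + gmult k z"]
          by (simp add: algebra_simps)
      qed
      finally show ?thesis .
    qed
    hence "shiftf r z (x + y) - T y k \<le> shiftf r z x" for k
      by (intro ge) (simp add: algebra_simps)
    hence "shiftf r z (x + y) - shiftf r z x \<le> shiftf r z y"
      by (intro ge) (simp add: algebra_simps)
    thus ?thesis by simp
  qed
  have hom: "shiftf r z (gmult n x) = real n * shiftf r z x" for n x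
  proof (cases "n = 0")
    case True
    have "shiftf r z 0 \<le> 0" using le[of 0 0] by (simp add: T_def sublin_0[OF r] gmult_Suc)
    moreover have "0 \<le> shiftf r z 0" by (rule ge) (simp add: T_def sublin_hom[OF r])
    ultimately show ?thesis using True by simp
  next
    case False
    hence npos: "real n > 0" by simp
    have A: "shiftf r z (gmult n x) \<le> real n * T x k" for k
    proof -
      have "shiftf r z (gmult n x) \<le> T (gmult n x) (n * k)" by (rule le)
      also have "\<dots> = real n * T x k"
      proof -
        have "gmult n x + gmult (n*k) z = gmult n (x + gmult k z)" by (simp only: gmult_plus gmult_mult)
        thus ?thesis unfolding T_def using sublin_hom[OF r, of n "x + gmult k z"]
          by (simp add: algebra_simps)
      qed
      finally show ?thesis .
    qed
    have "shiftf r z (gmult n x) / real n \<le> shiftf r z x"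
      by (rule ge) (use A npos in \<open>simp add: divide_le_eq mult.commute\<close>)
    hence 1: "shiftf r z (gmult n x) \<le> real n * shiftf r z x"
      using npos by (simp add: divide_le_eq mult.commute)
    have B: "real n * T x k \<le> T (gmult n x) k" for k
    proof -
      obtain m where m: "n = Suc m" using False by (cases n) auto
      have eq: "gmult n (x + gmult k z) = (gmult n x + gmult k z) + gmult (m * k) z"
        by (simp add: m gmult_plus gmult_mult[symmetric] gmult_add[symmetric] algebra_simps)
      have "real n * r (x + gmult k z) = r (gmult n (x + gmult k z))" using sublin_hom[OF r] by simp
      also have "\<dots> \<le> r (gmult n x + gmult k z) + r (gmult (m * k) z)"
        unfolding eq by (rule sublin_sub[OF r])
      also have "\<dots> = r (gmult n x + gmult k z) + real m * real k * r z"
        using sublin_hom[OF r] by simp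
      finally have "real n * r (x + gmult k z) \<le> r (gmult n x + gmult k z) + real m * real k * r z" .
      thus ?thesis unfolding T_def m by (simp add: algebra_simps)
    qed
    have 2: "real n * shiftf r z x \<le> shiftf r z (gmult n x)"
      by (rule ge) (meson B le mult_left_mono npos less_imp_le order_trans)
    show ?thesis using 1 2 by simp
  qed
  show "sublin (shiftf r z)" unfolding sublin_def using sub hom by blast
qed

lemma minimal_sublin:
  fixes q0 :: "'g::ab_group_add \<Rightarrow> real"
  assumes q0: "sublin q0"
  shows "\<exists>r. sublin r \<and> (\<forall>x. r x \<le> q0 x) \<and>
           (\<forall>r'. sublin r' \<and> (\<forall>x. r' x \<le> r x) \<longrightarrow> r' = r)"
proof -
  define S where "S = {r. sublin r \<and> (\<forall>x. r x \<le> q0 x)}"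
  define E where "E r = {(x, t). r x < t}" for r :: "'g \<Rightarrow> real"
  have Esub: "E r1 \<subseteq> E r2 \<Longrightarrow> r2 x \<le> r1 x" for r1 r2 x
  proof (rule ccontr)
    assume "E r1 \<subseteq> E r2" "\<not> r2 x \<le> r1 x"
    hence "(x, r2 x) \<in> E r1" "(x, r2 x) \<notin> E r2" by (auto simp: E_def)
    thus False using \<open>E r1 \<subseteq> E r2\<close> by blast
  qed
  have lb: "- q0 (- x) \<le> r x" if "r \<in> S" for r x
  proof -
    have "- r (- x) \<le> r (- (- x))" using sublin_neg[of r "-x"] that by (simp add: S_def)
    moreover have "r (- x) \<le> q0 (- x)" using that by (simp add: S_def)
    ultimately show ?thesis by simp
  qed
  have "\<exists>M\<in>E ` S. \<forall>X\<in>E ` S. M \<subseteq> X \<longrightarrow> X = M"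
  proof (rule subset_Zorn_nonempty)
    show "E ` S \<noteq> {}" using q0 by (auto simp: S_def)
  next
    fix C assume Cne: "C \<noteq> {}" and ch: "subset.chain (E ` S) C"
    define R where "R = {r \<in> S. E r \<in> C}"
    have CS: "C \<subseteq> E ` S" using ch by (simp add: subset_chain_def)
    have chC: "\<And>X Y. X \<in> C \<Longrightarrow> Y \<in> C \<Longrightarrow> X \<subseteq> Y \<or> Y \<subseteq> X" using ch by (simp add: subset_chain_def)
    have Rne: "R \<noteq> {}" using Cne CS by (auto simp: R_def)
    have RS: "R \<subseteq> S" by (auto simp: R_def)
    have comp: "(\<forall>x. r1 x \<le> r2 x) \<or> (\<forall>x. r2 x \<le> r1 x)" if "r1 \<in> R" "r2 \<in> R" for r1 r2
      using chC[of "E r1" "E r2"] that Esub by (auto simp: R_def)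
    define m where "m x = Inf ((\<lambda>r. r x) ` R)" for x
    have bdd: "bdd_below ((\<lambda>r. r x) ` R)" for x
      using lb RS by (intro bdd_belowI[of _ "- q0 (-x)"]) auto
    have mle: "m x \<le> r x" if "r \<in> R" for r x
      unfolding m_def by (rule cInf_lower) (use that bdd in auto)
    have mge: "c \<le> m x" if "\<And>r. r \<in> R \<Longrightarrow> c \<le> r x" for c x
      unfolding m_def by (rule cInf_greatest) (use that Rne in auto)
    have rsub: "sublin r" if "r \<in> R" for r using that RS by (auto simp: S_def)
    have msub: "m (x + y) \<le> m x + m y" for x y
    proof -
      have "m (x + y) \<le> r1 x + r2 y" if "r1 \<in> R" "r2 \<in> R" for r1 r2
      proof (cases "\<forall>x. r1 x \<le> r2 x")
        case True
        have "m (x + y) \<le> r1 (x + y)" by (rule mle[OF that(1)])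
        also have "\<dots> \<le> r1 x + r1 y" by (rule sublin_sub[OF rsub[OF that(1)]])
        also have "\<dots> \<le> r1 x + r2 y" using True by simp
        finally show ?thesis .
      next
        case False
        hence F: "\<forall>x. r2 x \<le> r1 x" using comp[OF that] by blast
        have "m (x + y) \<le> r2 (x + y)" by (rule mle[OF that(2)])
        also have "\<dots> \<le> r2 x + r2 y" by (rule sublin_sub[OF rsub[OF that(2)]])
        also have "\<dots> \<le> r1 x + r2 y" using F by simp
        finally show ?thesis .
      qed
      hence "m (x + y) - r2 y \<le> m x" if "r2 \<in> R" for r2
        using that by (intro mge) (simp add: algebra_simps)
      hence "m (x + y) - m x \<le> m y" by (intro mge) (simp add: algebra_simps)
      thus ?thesis by simp
    qed
    have mhom: "m (gmult n x) = real n * m x" for n x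
    proof (cases "n = 0")
      case True
      obtain r0 where r0: "r0 \<in> R" using Rne by blast
      have "m 0 \<le> 0" using mle[OF r0, of 0] sublin_0[OF rsub[OF r0]] by simp
      moreover have "0 \<le> m 0" by (rule mge) (simp add: sublin_0[OF rsub])
      ultimately show ?thesis using True by simp
    next
      case False
      hence npos: "real n > 0" by simp
      have "m (gmult n x) / real n \<le> m x"
      proof (rule mge)
        fix r assume r: "r \<in> R"
        have "m (gmult n x) \<le> real n * r x" using mle[OF r] sublin_hom[OF rsub[OF r]] by metis
        thus "m (gmult n x) / real n \<le> r x" using npos by (simp add: divide_le_eq mult.commute)
      qed
      hence 1: "m (gmult n x) \<le> real n * m x" using npos by (simp add: divide_le_eq mult.commute)
      have 2: "real n * m x \<le> m (gmult n x)"
      proof (rule mge)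
        fix r assume r: "r \<in> R"
        have "real n * m x \<le> real n * r x" using mle[OF r] npos by simp
        thus "real n * m x \<le> r (gmult n x)" using sublin_hom[OF rsub[OF r]] by simp
      qed
      show ?thesis using 1 2 by simp
    qed
    have mS: "m \<in> S"
    proof -
      obtain r0 where r0: "r0 \<in> R" using Rne by blast
      have "m x \<le> q0 x" for x
      proof -
        have "r0 x \<le> q0 x" using r0 RS by (auto simp: S_def)
        thus ?thesis using mle[OF r0, of x] by linarith
      qed
      moreover have "sublin m" unfolding sublin_def using msub mhom by blast
      ultimately show ?thesis by (simp add: S_def)
    qed
    have "\<Union>C = E m"
    proof (intro set_eqI iffI)
      fix w assume "w \<in> \<Union>C"
      then obtain X where X: "X \<in> C" "w \<in> X" by blast
      then obtain r where r: "r \<in> S" "X = E r" using CS by blast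
      hence rR: "r \<in> R" using X by (simp add: R_def)
      obtain x t where w: "w = (x, t)" by (cases w)
      have "r x < t" using X r w by (simp add: E_def)
      thus "w \<in> E m" using mle[OF rR, of x] w by (simp add: E_def)
    next
      fix w assume "w \<in> E m"
      obtain x t where w: "w = (x, t)" by (cases w)
      have "m x < t" using \<open>w \<in> E m\<close> w by (simp add: E_def)
      then obtain r where r: "r \<in> R" "r x < t"
        unfolding m_def using Rne bdd[of x] by (subst (asm) cInf_less_iff) auto
      hence "E r \<in> C" "w \<in> E r" using w by (auto simp: R_def E_def)
      thus "w \<in> \<Union>C" by blast
    qed
    thus "\<Union>C \<in> E ` S" using mS by blast
  qed
  then obtain r where r: "r \<in> S" and max: "\<forall>X\<in>E ` S. E r \<subseteq> X \<longrightarrow> X = E r" by blast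
  have "r' = r" if "sublin r'" "\<forall>x. r' x \<le> r x" for r'
  proof -
    have r'S: "r' \<in> S" using that r by (auto simp: S_def intro: order_trans)
    have "E r \<subseteq> E r'" using that(2) by (auto simp: E_def intro: le_less_trans)
    hence "E r' = E r" using max r'S by blast
    hence "r x \<le> r' x" for x using Esub[of r' r] by simp
    thus "r' = r" using that(2) by (intro ext antisym) auto
  qed
  thus ?thesis using r by (auto simp: S_def)
qed

lemma hahn_banach_group:
  fixes q :: "'g::ab_group_add \<Rightarrow> real"
  assumes q: "sublin q"
  shows "\<exists>f. (\<forall>x y. f (x + y) = f x + f y) \<and> (\<forall>x. f x \<le> q x) \<and> f y = q y"
proof -
  define q0 where "q0 = shiftf q y"
  have q0s: "sublin q0" and q0le: "\<And>x. q0 x \<le> q x" and q0y: "q0 (- y) \<le> - q y"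
    using shiftf_props[OF q, of y] by (auto simp: q0_def)
  obtain r where rs: "sublin r" and rle: "\<forall>x. r x \<le> q0 x"
    and rmin: "\<forall>r'. sublin r' \<and> (\<forall>x. r' x \<le> r x) \<longrightarrow> r' = r"
    using minimal_sublin[OF q0s] by blast
  have neg: "r (- z) = - r z" for z
  proof -
    have "shiftf r z = r" using rmin shiftf_props[OF rs, of z] by blast
    hence "r (- z) \<le> - r z" using shiftf_props(3)[OF rs, of z] by simp
    thus ?thesis using sublin_neg[OF rs, of z] by simp
  qed
  have add: "r (x + z) = r x + r z" for x z
  proof -
    have "r x = r ((x + z) + (- z))" by simp
    also have "\<dots> \<le> r (x + z) + r (- z)" by (rule sublin_sub[OF rs])
    finally have "r x \<le> r (x + z) - r z" using neg by simp
    thus ?thesis using sublin_sub[OF rs, of x z] by simp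
  qed
  have "r y \<le> q y" using rle q0le order_trans by blast
  moreover have "q y \<le> r y" using rle[rule_format, of "-y"] q0y neg[of y] by simp
  ultimately show ?thesis using add rle q0le by (intro exI[of _ r]) (auto intro: order_trans)
qed

lemma cont_discrete: "continuous_on UNIV (g :: 'a discrete \<Rightarrow> 'b::topological_space)"
  unfolding continuous_on_open_invariant using open_discrete by blast

lemma embed:
  fixes q :: "'g::ab_group_add \<Rightarrow> real"
  assumes qs: "sublin q" and qsym: "\<And>x. q (-x) = q x"
  shows "\<exists>\<Phi> :: 'g \<Rightarrow> 'g linf. group_hom \<Phi> \<and> (\<forall>x. norm (\<Phi> x) = q x)"
proof -
  have "\<forall>y. \<exists>f. (\<forall>x z. f (x + z) = f x + f z) \<and> (\<forall>x. f x \<le> q x) \<and> f y = q y"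
    using hahn_banach_group[OF qs] by blast
  then obtain F where Fadd: "\<And>y x z. F y (x + z) = F y x + F y z"
    and Fle: "\<And>y x. F y x \<le> q x" and Fy: "\<And>y. F y y = q y" by metis
  have Fneg: "F y (- x) = - F y x" for y x
  proof -
    have "F y 0 = F y 0 + F y 0" using Fadd[of y 0 0] by simp
    hence "F y 0 = 0" by simp
    moreover have "F y 0 = F y x + F y (-x)" using Fadd[of y x "-x"] by simp
    ultimately show ?thesis by simp
  qed
  have Fabs: "\<bar>F y x\<bar> \<le> q x" for y x
    using Fle[of y x] Fle[of y "-x"] Fneg[of y x] qsym[of x] by linarith
  define g where "g x = (\<lambda>d::'g discrete. F (of_discrete d) x)" for x
  have mem: "g x \<in> bcontfun" for x
    by (rule bcontfun_normI[OF cont_discrete, of _ "q x"]) (simp add: g_def Fabs)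
  define \<Phi> where "\<Phi> x = (Bcontfun (g x) :: 'g linf)" for x
  have ap: "apply_bcontfun (\<Phi> x) = g x" for x unfolding \<Phi>_def using mem Bcontfun_inverse by blast
  have hom: "group_hom \<Phi>"
    unfolding group_hom_def by (intro allI bcontfun_eqI) (simp add: ap g_def Fadd)
  have "norm (\<Phi> x) = q x" for x
  proof (rule antisym)
    show "norm (\<Phi> x) \<le> q x" by (rule norm_bound) (simp add: ap g_def Fabs)
    have "norm (apply_bcontfun (\<Phi> x) (discrete x)) \<le> norm (\<Phi> x)" by (rule norm_bounded)
    moreover have "norm (apply_bcontfun (\<Phi> x) (discrete x)) = \<bar>q x\<bar>"
      by (simp add: ap g_def discrete_inverse Fy)
    ultimately show "q x \<le> norm (\<Phi> x)" by linarith
  qed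
  thus ?thesis using hom by blast
qed

lemma id_modulus: "modulus_of_continuity (\<lambda>t. t)"
  unfolding modulus_of_continuity_def
  by (auto simp: mono_on_def intro: tendsto_ident_at)

lemma nonexp_bounded: "nonexpansive_hom p \<psi> \<Longrightarrow> bounded_hom p \<psi>"
  unfolding nonexpansive_hom_def bounded_hom_def using id_modulus by blast

theorem theorem2p10:
  fixes p :: "'g::ab_group_add \<Rightarrow> real"
  assumes "is_value p"
  shows
    \<comment> \<open>(I)\<close>
    "(class_O0 p \<longleftrightarrow> \<not> (\<exists>\<psi> :: 'g \<Rightarrow> 'g linf. group_hom \<psi> \<and> bounded_hom p \<psi> \<and> \<psi> \<noteq> (\<lambda>_. 0)))
     \<and> (class_O0 p \<longrightarrow> (\<forall>\<psi> :: 'g \<Rightarrow> 'b::banach. group_hom \<psi> \<and> bounded_hom p \<psi> \<longrightarrow> \<psi> = (\<lambda>_. 0)))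
     \<and> \<comment> \<open>(II)\<close>
     (class_Oinf p \<longleftrightarrow> (\<exists>\<psi> :: 'g \<Rightarrow> 'g linf. group_hom \<psi> \<and> isometric_hom p \<psi>))
     \<and> ((\<exists>\<psi> :: 'g \<Rightarrow> 'b. group_hom \<psi> \<and> isometric_hom p \<psi>) \<longrightarrow> class_Oinf p)
     \<and> \<comment> \<open>(III)\<close>
     (class_O1 p \<longleftrightarrow> (\<exists>\<psi> :: 'g \<Rightarrow> 'g linf. group_hom \<psi> \<and> nonexpansive_hom p \<psi> \<and> trivial_kernel \<psi>))
     \<and> (class_O1 p \<longleftrightarrow> (\<exists>\<psi> :: 'g \<Rightarrow> 'g linf. group_hom \<psi> \<and> bounded_hom p \<psi> \<and> trivial_kernel \<psi>))
     \<and> ((\<exists>\<psi> :: 'g \<Rightarrow> 'b. group_hom \<psi> \<and> nonexpansive_hom p \<psi> \<and> trivial_kernel \<psi>) \<longrightarrow> class_O1 p)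
     \<and> ((\<exists>\<psi> :: 'g \<Rightarrow> 'b. group_hom \<psi> \<and> bounded_hom p \<psi> \<and> trivial_kernel \<psi>) \<longrightarrow> class_O1 p)"
proof -
  note pv = assms
  define q where "q = p0star p"
  have qs: "sublin q" unfolding sublin_def q_def using q_sub[OF pv] q_hom[OF pv] by blast
  have qsym: "\<And>x. q (-x) = q x" unfolding q_def using q_sym[OF pv] by blast
  have qle: "\<And>x. q x \<le> p x" unfolding q_def using q_le[OF pv] by blast
  have qnn: "\<And>x. q x \<ge> 0" unfolding q_def using q_nn[OF pv] by blast
  have q0: "q 0 = 0" unfolding q_def using q_0[OF pv] by blast
  obtain \<Phi> :: "'g \<Rightarrow> 'g linf" where \<Phi>hom: "group_hom \<Phi>" and \<Phi>n: "\<And>x. norm (\<Phi> x) = q x"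
    using embed[OF qs qsym] by blast
  have \<Phi>ne: "nonexpansive_hom p \<Phi>" unfolding nonexpansive_hom_def using \<Phi>n qle by simp
  have \<Phi>bd: "bounded_hom p \<Phi>" by (rule nonexp_bounded[OF \<Phi>ne])
  have O1: "class_O1 p \<longleftrightarrow> (\<forall>x. q x = 0 \<longrightarrow> x = 0)"
    unfolding class_O1_def is_value_def q_def[symmetric]
    using qnn qsym q0 sublin_sub[OF qs] by auto
  have kill: "\<And>(\<psi>::'g \<Rightarrow> 'e::real_normed_vector) x. group_hom \<psi> \<Longrightarrow> bounded_hom p \<psi> \<Longrightarrow> q x = 0 \<Longrightarrow> \<psi> x = 0"
    unfolding q_def using bounded_kills[OF pv] by blast
  have iso: "\<And>(\<psi>::'g \<Rightarrow> 'e::real_normed_vector). group_hom \<psi> \<Longrightarrow> isometric_hom p \<psi> \<Longrightarrow> class_Oinf p"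
  proof -
    fix \<psi> :: "'g \<Rightarrow> 'e::real_normed_vector"
    assume h: "group_hom \<psi>" and i: "isometric_hom p \<psi>"
    have "p (gmult n x) = real n * p x" for n x
      using i hom_gmult[OF h, of n x] unfolding isometric_hom_def by (metis norm_scaleR abs_of_nat)
    have "q x = p x" for x
    proof -
      have ev: "\<forall>\<^sub>F n in sequentially. p x = p (gmult n x) / real n"
        using eventually_ge_at_top[of "1::nat"]
        by eventually_elim (simp add: \<open>\<And>n x. p (gmult n x) = real n * p x\<close>)
      have "(\<lambda>n. p (gmult n x) / real n) \<longlonglongrightarrow> p x"
        using tendsto_cong[OF ev] tendsto_const by blast
      thus ?thesis unfolding q_def using q_conv[OF pv, of x] LIMSEQ_unique by blast
    qed
    thus "class_Oinf p" unfolding class_Oinf_def q_def by blast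
  qed
  have inj: "\<And>(\<psi>::'g \<Rightarrow> 'e::real_normed_vector). group_hom \<psi> \<Longrightarrow> bounded_hom p \<psi> \<Longrightarrow> trivial_kernel \<psi> \<Longrightarrow> class_O1 p"
    unfolding O1 trivial_kernel_def using kill by blast
  have I1: "class_O0 p \<longleftrightarrow> \<not> (\<exists>\<psi> :: 'g \<Rightarrow> 'g linf. group_hom \<psi> \<and> bounded_hom p \<psi> \<and> \<psi> \<noteq> (\<lambda>_. 0))"
  proof
    assume "class_O0 p"
    hence "\<And>x. q x = 0" unfolding class_O0_def q_def by blast
    thus "\<not> (\<exists>\<psi> :: 'g \<Rightarrow> 'g linf. group_hom \<psi> \<and> bounded_hom p \<psi> \<and> \<psi> \<noteq> (\<lambda>_. 0))"
      using kill by blast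
  next
    assume nex: "\<not> (\<exists>\<psi> :: 'g \<Rightarrow> 'g linf. group_hom \<psi> \<and> bounded_hom p \<psi> \<and> \<psi> \<noteq> (\<lambda>_. 0))"
    have "q x = 0" for x
    proof (rule ccontr)
      assume "q x \<noteq> 0"
      hence "\<Phi> x \<noteq> 0" using \<Phi>n[of x] by auto
      hence "\<Phi> \<noteq> (\<lambda>_. 0)" by (metis)
      thus False using nex \<Phi>hom \<Phi>bd by blast
    qed
    thus "class_O0 p" unfolding class_O0_def q_def by blast
  qed
  have I2: "class_O0 p \<longrightarrow> (\<forall>\<psi> :: 'g \<Rightarrow> 'b::banach. group_hom \<psi> \<and> bounded_hom p \<psi> \<longrightarrow> \<psi> = (\<lambda>_. 0))"
  proof (intro impI allI)
    fix \<psi> :: "'g \<Rightarrow> 'b" assume "class_O0 p" and h: "group_hom \<psi> \<and> bounded_hom p \<psi>"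
    hence "\<And>x. q x = 0" unfolding class_O0_def q_def by blast
    thus "\<psi> = (\<lambda>_. 0)" using kill h by blast
  qed
  have II1: "class_Oinf p \<longleftrightarrow> (\<exists>\<psi> :: 'g \<Rightarrow> 'g linf. group_hom \<psi> \<and> isometric_hom p \<psi>)"
  proof
    assume "class_Oinf p"
    hence "\<And>x. q x = p x" unfolding class_Oinf_def q_def by blast
    hence "isometric_hom p \<Phi>" unfolding isometric_hom_def using \<Phi>n by simp
    thus "\<exists>\<psi> :: 'g \<Rightarrow> 'g linf. group_hom \<psi> \<and> isometric_hom p \<psi>" using \<Phi>hom by blast
  next
    assume "\<exists>\<psi> :: 'g \<Rightarrow> 'g linf. group_hom \<psi> \<and> isometric_hom p \<psi>"
    thus "class_Oinf p" using iso by blast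
  qed
  have II2: "(\<exists>\<psi> :: 'g \<Rightarrow> 'b. group_hom \<psi> \<and> isometric_hom p \<psi>) \<longrightarrow> class_Oinf p"
    using iso by blast
  have \<Phi>tk: "class_O1 p \<Longrightarrow> trivial_kernel \<Phi>"
    unfolding O1 trivial_kernel_def using \<Phi>n by (metis norm_zero)
  have III1: "class_O1 p \<longleftrightarrow> (\<exists>\<psi> :: 'g \<Rightarrow> 'g linf. group_hom \<psi> \<and> nonexpansive_hom p \<psi> \<and> trivial_kernel \<psi>)"
    using \<Phi>tk \<Phi>hom \<Phi>ne inj nonexp_bounded by blast
  have III2: "class_O1 p \<longleftrightarrow> (\<exists>\<psi> :: 'g \<Rightarrow> 'g linf. group_hom \<psi> \<and> bounded_hom p \<psi> \<and> trivial_kernel \<psi>)"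
    using \<Phi>tk \<Phi>hom \<Phi>bd inj by blast
  have III3: "(\<exists>\<psi> :: 'g \<Rightarrow> 'b. group_hom \<psi> \<and> nonexpansive_hom p \<psi> \<and> trivial_kernel \<psi>) \<longrightarrow> class_O1 p"
    using inj nonexp_bounded by blast
  have III4: "(\<exists>\<psi> :: 'g \<Rightarrow> 'b. group_hom \<psi> \<and> bounded_hom p \<psi> \<and> trivial_kernel \<psi>) \<longrightarrow> class_O1 p"
    using inj by blast
  show ?thesis using I1 I2 II1 II2 III1 III2 III3 III4 by blast
qed

end
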